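(* Let $\mathcal{E}=(E,\vdash)$ be an event structure and let $C$ be its set of left-closed configurations. Then: (1) if $\mathcal{E}$ is singular, $C$ is closed under bounded unions; (2) if $\mathcal{E}$ is conjunctive, $C$ is closed under nonempty intersections; (3) if $\mathcal{E}$ is locally conjunctive, $C$ is closed under bounded nonempty intersections; (4) if $\mathcal{E}$ has finite conflict, so does $(E,C)$; (5) if $\mathcal{E}$ has binary conflict, so does $(E,C)$; (6) if $\mathcal{E}$ is singular and has finite conflict, $C$ is closed under finitely consistent unions; (7) if $\mathcal{E}$ is singular and has binary conflict, $C$ is closed under pairwise consistent unions; (8) if $\mathcal{E}$ is locally conjunctive and has finite conflict, $C$ is closed under finitely consistent nonempty intersections; (9) if $\mathcal{E}$ is locally conjunctive and has binary conflict, $C$ is closed under pairwise consistent nonempty intersections.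
   Context: An event structure is $(E,\vdash)$ with $\vdash\subseteq\mathcal{P}(E)\times\mathcal{P}(E)$; $X\subseteq E$ is a left-closed configuration iff for all $Y\subseteq X$ there is $Z\subseteq X$ with $Z\vdash Y$. For the event structure write $\mathrm{Con}(X)$ iff for every $Y\subseteq X$ there is $Z\subseteq E$ with $Z\vdash Y$. The event structure is singular if $X\vdash Y$ implies $X=\emptyset$ or $|Y|=1$; conjunctive if whenever $X_i\vdash Y$ for all $i\in I\neq\emptyset$ then $\bigcap_{i}X_i\vdash Y$; locally conjunctive if whenever $X_i\vdash Y$ for all $i\in I\ne\emptyset$ and $\mathrm{Con}(\bigcup_iX_i\cup Y)$ then $\bigcap_iX_i\vdash Y$; it has finite conflict if $\emptyset\vdash X$ for every infinite $X$; binary conflict if $\emptyset\vdash X$ for every $X$ with $|X|>2$. For a configuration structure $(E,C)$ ($C\subseteq\mathcal{P}(E)$): $X$ is consistent, $\mathrm{Con}_C(X)$, if $X\subseteq z$ for some $z\in C$; finitely consistent if every finite subset is consistent; pairwise consistent if every subset of size $\le2$ is consistent. $C$ is closed under bounded unions if $A\subseteq C$ and $\bigcup A$ consistent imply $\bigcup A\in C$; under nonempty intersections if $\emptyset\ne A\subseteq C$ implies $\bigcap A\in C$; under bounded nonempty intersections if $\emptyset\ne A\subseteq C$ and $\bigcup A$ consistent imply $\bigcap A\in C$; under finitely (resp. pairwise) consistent unions if $A\subseteq C$ and $\bigcup A$ finitely (resp. pairwise) consistent imply $\bigcup A\in C$; under finitely (resp. pairwise) consistent nonempty intersections if $\emptyset\ne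 A\subseteq C$ and $\bigcup A$ finitely (resp. pairwise) consistent imply $\bigcap A\in C$. $(E,C)$ has finite conflict if, for every $X\subseteq E$, whenever every finite $Y\subseteq X$ satisfies $Y\subseteq z\subseteq X$ for some $z\in C$, then $X\in C$; it has binary conflict if the same holds with "finite $Y$" replaced by "$Y$ with $|Y|\le2$". *)

theory Defs
  imports Main
begin

text \<open>An event structure (E, ent) with ent \<subseteq> P(E) \<times> P(E); ent X Y means X \<turnstile> Y.\<close>
definition event_structure :: "'a set \<Rightarrow> ('a set \<Rightarrow> 'a set \<Rightarrow> bool) \<Rightarrow> bool" where
  "event_structure E ent \<longleftrightarrow> (\<forall>X Y. ent X Y \<longrightarrow> X \<subseteq> E \<and> Y \<subseteq> E)"

definition lconfigs :: "'a set \<Rightarrow> ('a set \<Rightarrow> 'a set \<Rightarrow> bool) \<Rightarrow> 'a set set" where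
  "lconfigs E ent = {X. X \<subseteq> E \<and> (\<forall>Y. Y \<subseteq> X \<longrightarrow> (\<exists>Z. Z \<subseteq> X \<and> ent Z Y))}"

definition es_Con :: "'a set \<Rightarrow> ('a set \<Rightarrow> 'a set \<Rightarrow> bool) \<Rightarrow> 'a set \<Rightarrow> bool" where
  "es_Con E ent X \<longleftrightarrow> (\<forall>Y. Y \<subseteq> X \<longrightarrow> (\<exists>Z. Z \<subseteq> E \<and> ent Z Y))"

definition es_singular :: "'a set \<Rightarrow> ('a set \<Rightarrow> 'a set \<Rightarrow> bool) \<Rightarrow> bool" where
  "es_singular E ent \<longleftrightarrow> (\<forall>X Y. ent X Y \<longrightarrow> X = {} \<or> card Y = 1)"

text \<open>Families indexed by a nonempty set I are represented by nonempty sets of sets (their ranges).\<close>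
definition es_conjunctive :: "'a set \<Rightarrow> ('a set \<Rightarrow> 'a set \<Rightarrow> bool) \<Rightarrow> bool" where
  "es_conjunctive E ent \<longleftrightarrow>
     (\<forall>\<X> Y. \<X> \<noteq> {} \<and> (\<forall>X\<in>\<X>. ent X Y) \<longrightarrow> ent (\<Inter>\<X>) Y)"

definition es_locally_conjunctive :: "'a set \<Rightarrow> ('a set \<Rightarrow> 'a set \<Rightarrow> bool) \<Rightarrow> bool" where
  "es_locally_conjunctive E ent \<longleftrightarrow>
     (\<forall>\<X> Y. \<X> \<noteq> {} \<and> (\<forall>X\<in>\<X>. ent X Y) \<and> es_Con E ent (\<Union>\<X> \<union> Y) \<longrightarrow> ent (\<Inter>\<X>) Y)"

definition es_finite_conflict :: "'a set \<Rightarrow> ('a set \<Rightarrow> 'a set \<Rightarrow> bool) \<Rightarrow> bool" where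
  "es_finite_conflict E ent \<longleftrightarrow> (\<forall>X. X \<subseteq> E \<and> infinite X \<longrightarrow> ent {} X)"

definition es_binary_conflict :: "'a set \<Rightarrow> ('a set \<Rightarrow> 'a set \<Rightarrow> bool) \<Rightarrow> bool" where
  "es_binary_conflict E ent \<longleftrightarrow> (\<forall>X. X \<subseteq> E \<and> (infinite X \<or> 2 < card X) \<longrightarrow> ent {} X)"

definition cs_Con :: "'a set set \<Rightarrow> 'a set \<Rightarrow> bool" where
  "cs_Con C X \<longleftrightarrow> (\<exists>z\<in>C. X \<subseteq> z)"

definition cs_fin_Con :: "'a set set \<Rightarrow> 'a set \<Rightarrow> bool" where
  "cs_fin_Con C X \<longleftrightarrow> (\<forall>Y. Y \<subseteq> X \<and> finite Y \<longrightarrow> cs_Con C Y)"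

definition cs_pair_Con :: "'a set set \<Rightarrow> 'a set \<Rightarrow> bool" where
  "cs_pair_Con C X \<longleftrightarrow> (\<forall>Y. Y \<subseteq> X \<and> finite Y \<and> card Y \<le> 2 \<longrightarrow> cs_Con C Y)"

definition closed_bounded_unions :: "'a set set \<Rightarrow> bool" where
  "closed_bounded_unions C \<longleftrightarrow> (\<forall>A. A \<subseteq> C \<and> cs_Con C (\<Union>A) \<longrightarrow> \<Union>A \<in> C)"

definition closed_nonempty_inters :: "'a set set \<Rightarrow> bool" where
  "closed_nonempty_inters C \<longleftrightarrow> (\<forall>A. A \<noteq> {} \<and> A \<subseteq> C \<longrightarrow> \<Inter>A \<in> C)"

definition closed_bounded_nonempty_inters :: "'a set set \<Rightarrow> bool" where
  "closed_bounded_nonempty_inters C \<longleftrightarrow>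
     (\<forall>A. A \<noteq> {} \<and> A \<subseteq> C \<and> cs_Con C (\<Union>A) \<longrightarrow> \<Inter>A \<in> C)"

definition closed_fin_con_unions :: "'a set set \<Rightarrow> bool" where
  "closed_fin_con_unions C \<longleftrightarrow> (\<forall>A. A \<subseteq> C \<and> cs_fin_Con C (\<Union>A) \<longrightarrow> \<Union>A \<in> C)"

definition closed_pair_con_unions :: "'a set set \<Rightarrow> bool" where
  "closed_pair_con_unions C \<longleftrightarrow> (\<forall>A. A \<subseteq> C \<and> cs_pair_Con C (\<Union>A) \<longrightarrow> \<Union>A \<in> C)"

definition closed_fin_con_nonempty_inters :: "'a set set \<Rightarrow> bool" where
  "closed_fin_con_nonempty_inters C \<longleftrightarrow>
     (\<forall>A. A \<noteq> {} \<and> A \<subseteq> C \<and> cs_fin_Con C (\<Union>A) \<longrightarrow> \<Inter>A \<in> C)"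

definition closed_pair_con_nonempty_inters :: "'a set set \<Rightarrow> bool" where
  "closed_pair_con_nonempty_inters C \<longleftrightarrow>
     (\<forall>A. A \<noteq> {} \<and> A \<subseteq> C \<and> cs_pair_Con C (\<Union>A) \<longrightarrow> \<Inter>A \<in> C)"

definition cs_finite_conflict :: "'a set \<Rightarrow> 'a set set \<Rightarrow> bool" where
  "cs_finite_conflict E C \<longleftrightarrow>
     (\<forall>X. X \<subseteq> E \<and> (\<forall>Y. Y \<subseteq> X \<and> finite Y \<longrightarrow> (\<exists>z\<in>C. Y \<subseteq> z \<and> z \<subseteq> X)) \<longrightarrow> X \<in> C)"

definition cs_binary_conflict :: "'a set \<Rightarrow> 'a set set \<Rightarrow> bool" where
  "cs_binary_conflict E C \<longleftrightarrow>
     (\<forall>X. X \<subseteq> E \<and> (\<forall>Y. Y \<subseteq> X \<and> finite Y \<and> card Y \<le> 2 \<longrightarrow> (\<exists>z\<in>C. Y \<subseteq> z \<and> z \<subseteq> X)) \<longrightarrow> X \<in> C)"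

end

theory Submission
  imports Defs
begin

lemma lc_sub: "X \<in> lconfigs E ent \<Longrightarrow> X \<subseteq> E"
  by (simp add: lconfigs_def)

lemma lc_ent: "X \<in> lconfigs E ent \<Longrightarrow> Y \<subseteq> X \<Longrightarrow> \<exists>Z. Z \<subseteq> X \<and> ent Z Y"
  by (simp add: lconfigs_def)

lemma lc_intro: "X \<subseteq> E \<Longrightarrow> (\<And>Y. Y \<subseteq> X \<Longrightarrow> \<exists>Z. Z \<subseteq> X \<and> ent Z Y) \<Longrightarrow> X \<in> lconfigs E ent"
  by (simp add: lconfigs_def)

lemma union_step:
  assumes "es_singular E ent" "A \<subseteq> lconfigs E ent" "Y \<subseteq> \<Union>A" "Y \<subseteq> z" "z \<in> lconfigs E ent"
  shows "\<exists>Z. Z \<subseteq> \<Union>A \<and> ent Z Y"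
proof -
  obtain Z where Z: "Z \<subseteq> z" "ent Z Y" using lc_ent[OF assms(5,4)] by blast
  show ?thesis
  proof (cases "Z = {}")
    case True then show ?thesis using Z by blast
  next
    case False
    then have "card Y = 1" using assms(1) Z unfolding es_singular_def by blast
    then obtain e where e: "Y = {e}" using card_1_singletonE by blast
    then obtain a where a: "a \<in> A" "e \<in> a" using assms(3) by blast
    then have "a \<in> lconfigs E ent" using assms(2) by blast
    then obtain Z' where "Z' \<subseteq> a" "ent Z' Y" using lc_ent[of a E ent Y] e a by blast
    then show ?thesis using a by blast
  qed
qed

lemma inter_step:
  assumes "A \<noteq> {}" "A \<subseteq> lconfigs E ent" "Y \<subseteq> \<Inter>A"
    "\<And>\<X>. \<X> \<noteq> {} \<Longrightarrow> (\<forall>X\<in>\<X>. ent X Y) \<Longrightarrow> \<Union>\<X> \<subseteq> \<Union>A \<Longrightarrow> ent (\<Inter>\<X>) Y"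
  shows "\<exists>Z. Z \<subseteq> \<Inter>A \<and> ent Z Y"
proof -
  define \<X> where "\<X> = {Z. (\<exists>a\<in>A. Z \<subseteq> a) \<and> ent Z Y}"
  have ex: "\<exists>Z\<in>\<X>. Z \<subseteq> a" if "a \<in> A" for a
  proof -
    have "a \<in> lconfigs E ent" "Y \<subseteq> a" using that assms(2,3) by auto
    then obtain Z where "Z \<subseteq> a" "ent Z Y" using lc_ent[of a E ent Y] by blast
    then show ?thesis using that unfolding \<X>_def by blast
  qed
  have ne: "\<X> \<noteq> {}" using ex assms(1) by blast
  have U: "\<Union>\<X> \<subseteq> \<Union>A" unfolding \<X>_def by blast
  have all: "\<forall>X\<in>\<X>. ent X Y" unfolding \<X>_def by blast
  have "ent (\<Inter>\<X>) Y" using assms(4)[OF ne all U] .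
  moreover have "\<Inter>\<X> \<subseteq> \<Inter>A" using ex by blast
  ultimately show ?thesis by blast
qed

lemma con_mono: "es_Con E ent W \<Longrightarrow> W' \<subseteq> W \<Longrightarrow> es_Con E ent W'"
  unfolding es_Con_def by (meson order_trans)

lemma con_lc: "z \<in> lconfigs E ent \<Longrightarrow> es_Con E ent z"
  unfolding es_Con_def
proof (intro allI impI)
  fix Y assume a: "z \<in> lconfigs E ent" "Y \<subseteq> z"
  then obtain Z where "Z \<subseteq> z" "ent Z Y" using lc_ent[OF a] by blast
  moreover have "z \<subseteq> E" using lc_sub[OF a(1)] .
  ultimately show "\<exists>Z\<subseteq>E. ent Z Y" by blast
qed

lemma inter_sub: "A \<noteq> {} \<Longrightarrow> A \<subseteq> lconfigs E ent \<Longrightarrow> \<Inter>A \<subseteq> E"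
proof -
  assume "A \<noteq> {}" "A \<subseteq> lconfigs E ent"
  then obtain a where "a \<in> A" "a \<in> lconfigs E ent" by blast
  then have "a \<subseteq> E" using lc_sub[of a E ent] by blast
  then show ?thesis using \<open>a \<in> A\<close> by blast
qed

theorem mainTheorem11:
  fixes E :: "'a set" and ent :: "'a set \<Rightarrow> 'a set \<Rightarrow> bool"
  assumes "event_structure E ent"
  defines "C \<equiv> lconfigs E ent"
  shows "(es_singular E ent \<longrightarrow> closed_bounded_unions C)
    \<and> (es_conjunctive E ent \<longrightarrow> closed_nonempty_inters C)
    \<and> (es_locally_conjunctive E ent \<longrightarrow> closed_bounded_nonempty_inters C)
    \<and> (es_finite_conflict E ent \<longrightarrow> cs_finite_conflict E C)
    \<and> (es_binary_conflict E ent \<longrightarrow> cs_binary_conflict E C)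
    \<and> (es_singular E ent \<and> es_finite_conflict E ent \<longrightarrow> closed_fin_con_unions C)
    \<and> (es_singular E ent \<and> es_binary_conflict E ent \<longrightarrow> closed_pair_con_unions C)
    \<and> (es_locally_conjunctive E ent \<and> es_finite_conflict E ent \<longrightarrow> closed_fin_con_nonempty_inters C)
    \<and> (es_locally_conjunctive E ent \<and> es_binary_conflict E ent \<longrightarrow> closed_pair_con_nonempty_inters C)"
proof (intro conjI impI)
  have unionE: "\<Union>A \<subseteq> E" if "A \<subseteq> C" for A using that lc_sub[of _ E ent] unfolding C_def by blast
  have fin_con: "es_Con E ent W" if fc: "es_finite_conflict E ent" and "W \<subseteq> E" and
    h: "\<forall>Y. Y \<subseteq> W \<and> finite Y \<longrightarrow> cs_Con C Y" for W
    unfolding es_Con_def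
  proof (intro allI impI)
    fix Y assume Y: "Y \<subseteq> W"
    show "\<exists>Z\<subseteq>E. ent Z Y"
    proof (cases "finite Y")
      case True
      then obtain z where "z \<in> C" "Y \<subseteq> z" using h Y unfolding cs_Con_def by blast
      then show ?thesis using lc_ent[of z E ent Y] lc_sub[of z E ent] unfolding C_def by blast
    next
      case False then show ?thesis using fc Y \<open>W \<subseteq> E\<close> unfolding es_finite_conflict_def by blast
    qed
  qed
  have bin_con: "es_Con E ent W" if fc: "es_binary_conflict E ent" and "W \<subseteq> E" and
    h: "\<forall>Y. Y \<subseteq> W \<and> finite Y \<and> card Y \<le> 2 \<longrightarrow> cs_Con C Y" for W
    unfolding es_Con_def
  proof (intro allI impI)
    fix Y assume Y: "Y \<subseteq> W"
    show "\<exists>Z\<subseteq>E. ent Z Y"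
    proof (cases "finite Y \<and> card Y \<le> 2")
      case True
      then obtain z where "z \<in> C" "Y \<subseteq> z" using h Y unfolding cs_Con_def by blast
      then show ?thesis using lc_ent[of z E ent Y] lc_sub[of z E ent] unfolding C_def by blast
    next
      case False then show ?thesis using fc Y \<open>W \<subseteq> E\<close> unfolding es_binary_conflict_def by auto
    qed
  qed
  show "closed_bounded_unions C" if s: "es_singular E ent"
    unfolding closed_bounded_unions_def
  proof (intro allI impI)
    fix A assume "A \<subseteq> C \<and> cs_Con C (\<Union>A)"
    then obtain z where A: "A \<subseteq> C" "z \<in> C" "\<Union>A \<subseteq> z" unfolding cs_Con_def by blast
    show "\<Union>A \<in> C" unfolding C_def
    proof (rule lc_intro)
      show "\<Union>A \<subseteq> E" using unionE A(1) .
      fix Y assume "Y \<subseteq> \<Union>A"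
      then show "\<exists>Z\<subseteq>\<Union>A. ent Z Y"
        using union_step[OF s, of A Y z] A \<open>Y \<subseteq> \<Union>A\<close> unfolding C_def by blast
    qed
  qed
  show "closed_nonempty_inters C" if cj: "es_conjunctive E ent"
    unfolding closed_nonempty_inters_def
  proof (intro allI impI)
    fix A assume A: "A \<noteq> {} \<and> A \<subseteq> C"
    show "\<Inter>A \<in> C" unfolding C_def
    proof (rule lc_intro)
      show "\<Inter>A \<subseteq> E" using inter_sub[of A E ent] A unfolding C_def by blast
      fix Y assume Y: "Y \<subseteq> \<Inter>A"
      show "\<exists>Z\<subseteq>\<Inter>A. ent Z Y"
      proof (rule inter_step[of A E ent])
        fix \<X> assume "\<X> \<noteq> {}" "\<forall>X\<in>\<X>. ent X Y"
        then show "ent (\<Inter>\<X>) Y" using cj unfolding es_conjunctive_def by blast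
      qed (use A Y C_def in auto)
    qed
  qed
  show "closed_bounded_nonempty_inters C" if cj: "es_locally_conjunctive E ent"
    unfolding closed_bounded_nonempty_inters_def
  proof (intro allI impI)
    fix A assume "A \<noteq> {} \<and> A \<subseteq> C \<and> cs_Con C (\<Union>A)"
    then obtain z where A: "A \<noteq> {}" "A \<subseteq> C" "z \<in> C" "\<Union>A \<subseteq> z" unfolding cs_Con_def by blast
    have cz: "es_Con E ent z" using A con_lc[of z E ent] unfolding C_def by blast
    show "\<Inter>A \<in> C" unfolding C_def
    proof (rule lc_intro)
      show "\<Inter>A \<subseteq> E" using inter_sub[of A E ent] A unfolding C_def by blast
      fix Y assume Y: "Y \<subseteq> \<Inter>A"
      have "Y \<subseteq> \<Union>A" using Y A(1) by blast
      show "\<exists>Z\<subseteq>\<Inter>A. ent Z Y"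
      proof (rule inter_step[of A E ent])
        fix \<X> assume "\<X> \<noteq> {}" "\<forall>X\<in>\<X>. ent X Y" "\<Union>\<X> \<subseteq> \<Union>A"
        moreover have "es_Con E ent (\<Union>\<X> \<union> Y)"
          using con_mono[OF cz] \<open>\<Union>\<X> \<subseteq> \<Union>A\<close> \<open>Y \<subseteq> \<Union>A\<close> A(4) by (meson Un_least order_trans)
        ultimately show "ent (\<Inter>\<X>) Y" using cj unfolding es_locally_conjunctive_def by blast
      qed (use A Y C_def in auto)
    qed
  qed
  show "cs_finite_conflict E C" if fc: "es_finite_conflict E ent"
    unfolding cs_finite_conflict_def
  proof (intro allI impI)
    fix X assume X: "X \<subseteq> E \<and> (\<forall>Y. Y \<subseteq> X \<and> finite Y \<longrightarrow> (\<exists>z\<in>C. Y \<subseteq> z \<and> z \<subseteq> X))"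
    show "X \<in> C" unfolding C_def
    proof (rule lc_intro)
      show "X \<subseteq> E" using X by blast
      fix Y assume Y: "Y \<subseteq> X"
      show "\<exists>Z\<subseteq>X. ent Z Y"
      proof (cases "finite Y")
        case True
        then have "\<exists>z\<in>C. Y \<subseteq> z \<and> z \<subseteq> X" using X[THEN conjunct2, rule_format, of Y] Y by simp
        then obtain z where z: "z \<in> C" "Y \<subseteq> z" "z \<subseteq> X" by blast
        then have "z \<in> lconfigs E ent" by (simp add: C_def)
        then obtain Z where "Z \<subseteq> z" "ent Z Y" using lc_ent[of z E ent Y] z(2) by blast
        then show ?thesis using z(3) by blast
      next
        case False
        have "Y \<subseteq> E" using X Y by blast
        then have "ent {} Y" using fc False unfolding es_finite_conflict_def by blast
        then show ?thesis by blast
      qed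
    qed
  qed
  show "cs_binary_conflict E C" if fc: "es_binary_conflict E ent"
    unfolding cs_binary_conflict_def
  proof (intro allI impI)
    fix X assume X: "X \<subseteq> E \<and> (\<forall>Y. Y \<subseteq> X \<and> finite Y \<and> card Y \<le> 2 \<longrightarrow> (\<exists>z\<in>C. Y \<subseteq> z \<and> z \<subseteq> X))"
    show "X \<in> C" unfolding C_def
    proof (rule lc_intro)
      show "X \<subseteq> E" using X by blast
      fix Y assume Y: "Y \<subseteq> X"
      show "\<exists>Z\<subseteq>X. ent Z Y"
      proof (cases "finite Y \<and> card Y \<le> 2")
        case True
        then have "\<exists>z\<in>C. Y \<subseteq> z \<and> z \<subseteq> X" using X[THEN conjunct2, rule_format, of Y] Y by simp
        then obtain z where z: "z \<in> C" "Y \<subseteq> z" "z \<subseteq> X" by blast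
        then have "z \<in> lconfigs E ent" by (simp add: C_def)
        then obtain Z where "Z \<subseteq> z" "ent Z Y" using lc_ent[of z E ent Y] z(2) by blast
        then show ?thesis using z(3) by blast
      next
        case False
        then have "ent {} Y" using fc X Y unfolding es_binary_conflict_def by auto
        then show ?thesis by blast
      qed
    qed
  qed
  show "closed_fin_con_unions C" if h: "es_singular E ent \<and> es_finite_conflict E ent"
    unfolding closed_fin_con_unions_def
  proof (intro allI impI)
    fix A assume A: "A \<subseteq> C \<and> cs_fin_Con C (\<Union>A)"
    show "\<Union>A \<in> C" unfolding C_def
    proof (rule lc_intro)
      show "\<Union>A \<subseteq> E" using unionE[OF conjunct1[OF A]] .
      fix Y assume Y: "Y \<subseteq> \<Union>A"
      show "\<exists>Z\<subseteq>\<Union>A. ent Z Y"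
      proof (cases "finite Y")
        case True
        have "cs_Con C Y" using A Y True unfolding cs_fin_Con_def by blast
        then obtain z where z: "z \<in> C" "Y \<subseteq> z" unfolding cs_Con_def by blast
        have AC: "A \<subseteq> lconfigs E ent" using A by (simp add: C_def)
        have zC: "z \<in> lconfigs E ent" using z(1) by (simp add: C_def)
        have s: "es_singular E ent" using h by simp
        show ?thesis using union_step[OF s AC Y z(2) zC] by blast
      next
        case False
        have "Y \<subseteq> E" using order_trans[OF Y unionE[OF conjunct1[OF A]]] .
        then have "ent {} Y" using h False unfolding es_finite_conflict_def by simp
        then show ?thesis by blast
      qed
    qed
  qed
  show "closed_pair_con_unions C" if h: "es_singular E ent \<and> es_binary_conflict E ent"
    unfolding closed_pair_con_unions_def
  proof (intro allI impI)
    fix A assume A: "A \<subseteq> C \<and> cs_pair_Con C (\<Union>A)"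
    show "\<Union>A \<in> C" unfolding C_def
    proof (rule lc_intro)
      show "\<Union>A \<subseteq> E" using unionE[OF conjunct1[OF A]] .
      fix Y assume Y: "Y \<subseteq> \<Union>A"
      show "\<exists>Z\<subseteq>\<Union>A. ent Z Y"
      proof (cases "finite Y \<and> card Y \<le> 2")
        case True
        have "cs_Con C Y" using A Y True unfolding cs_pair_Con_def by blast
        then obtain z where z: "z \<in> C" "Y \<subseteq> z" unfolding cs_Con_def by blast
        have AC: "A \<subseteq> lconfigs E ent" using A by (simp add: C_def)
        have zC: "z \<in> lconfigs E ent" using z(1) by (simp add: C_def)
        have s: "es_singular E ent" using h by simp
        show ?thesis using union_step[OF s AC Y z(2) zC] by blast
      next
        case False
        have "Y \<subseteq> E" using order_trans[OF Y unionE[OF conjunct1[OF A]]] .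
        then have "ent {} Y" using h False unfolding es_binary_conflict_def by auto
        then show ?thesis by blast
      qed
    qed
  qed
  show "closed_fin_con_nonempty_inters C" if h: "es_locally_conjunctive E ent \<and> es_finite_conflict E ent"
    unfolding closed_fin_con_nonempty_inters_def
  proof (intro allI impI)
    fix A assume "A \<noteq> {} \<and> A \<subseteq> C \<and> cs_fin_Con C (\<Union>A)"
    then have A: "A \<noteq> {}" "A \<subseteq> C" "cs_fin_Con C (\<Union>A)" by auto
    have cz: "es_Con E ent (\<Union>A)"
      using fin_con[of "\<Union>A"] h unionE[OF A(2)] A unfolding cs_fin_Con_def by blast
    show "\<Inter>A \<in> C" unfolding C_def
    proof (rule lc_intro)
      show "\<Inter>A \<subseteq> E" using inter_sub[of A E ent] A unfolding C_def by blast
      fix Y assume Y: "Y \<subseteq> \<Inter>A"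
      have "Y \<subseteq> \<Union>A" using Y A(1) by blast
      show "\<exists>Z\<subseteq>\<Inter>A. ent Z Y"
      proof (rule inter_step[of A E ent])
        fix \<X> assume "\<X> \<noteq> {}" "\<forall>X\<in>\<X>. ent X Y" "\<Union>\<X> \<subseteq> \<Union>A"
        moreover have "es_Con E ent (\<Union>\<X> \<union> Y)"
          using con_mono[OF cz] \<open>\<Union>\<X> \<subseteq> \<Union>A\<close> \<open>Y \<subseteq> \<Union>A\<close> by (meson Un_least)
        ultimately show "ent (\<Inter>\<X>) Y" using h unfolding es_locally_conjunctive_def by blast
      qed (use A Y C_def in auto)
    qed
  qed
  show "closed_pair_con_nonempty_inters C" if h: "es_locally_conjunctive E ent \<and> es_binary_conflict E ent"
    unfolding closed_pair_con_nonempty_inters_def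
  proof (intro allI impI)
    fix A assume "A \<noteq> {} \<and> A \<subseteq> C \<and> cs_pair_Con C (\<Union>A)"
    then have A: "A \<noteq> {}" "A \<subseteq> C" "cs_pair_Con C (\<Union>A)" by auto
    have cz: "es_Con E ent (\<Union>A)"
      using bin_con[of "\<Union>A"] h unionE[OF A(2)] A unfolding cs_pair_Con_def by blast
    show "\<Inter>A \<in> C" unfolding C_def
    proof (rule lc_intro)
      show "\<Inter>A \<subseteq> E" using inter_sub[of A E ent] A unfolding C_def by blast
      fix Y assume Y: "Y \<subseteq> \<Inter>A"
      have "Y \<subseteq> \<Union>A" using Y A(1) by blast
      show "\<exists>Z\<subseteq>\<Inter>A. ent Z Y"
      proof (rule inter_step[of A E ent])
        fix \<X> assume "\<X> \<noteq> {}" "\<forall>X\<in>\<X>. ent X Y" "\<Union>\<X> \<subseteq> \<Union>A"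
        moreover have "es_Con E ent (\<Union>\<X> \<union> Y)"
          using con_mono[OF cz] \<open>\<Union>\<X> \<subseteq> \<Union>A\<close> \<open>Y \<subseteq> \<Union>A\<close> by (meson Un_least)
        ultimately show "ent (\<Inter>\<X>) Y" using h unfolding es_locally_conjunctive_def by blast
      qed (use A Y C_def in auto)
    qed
  qed
qed

end
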